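(* Consider an instance of the Steiner Team Orienteering Problem and the formulation $\mathcal{F}_1$ as described in the context, and let $\mathcal{K}$ be the set of conflicting vertex pairs. For every feasible solution $(x,y,z,\varphi)$ of $\mathcal{F}_1$ and every pair $\langle i,j\rangle\in\mathcal{K}$: (a) for every $V\subseteq N\setminus\{s\}$ with $\{i,j\}\subseteq V$, $\sum_{e\in\delta^-(V)}x_e\ge y_i+y_j$; and (b) for every $V\subseteq N\setminus\{t\}$ with $\{i,j\}\subseteq V$, $\sum_{e\in\delta^+(V)}x_e\ge y_i+y_j$.
   Context: An instance of the Steiner Team Orienteering Problem (STOP) consists of: a digraph $G=(N,A)$; an origin $s\in N$ and a destination $t\in N$ with $s\neq t$; disjoint sets $S,P\subseteq N\setminus\{s,t\}$ (mandatory and profitable vertices) with $N=S\cup P\cup\{s,t\}$; rewards $p_i\in\mathbb{Z}^+$ for $i\in P$; traverse times $d_{ij}\in\mathbb{R}^+$ for $(i,j)\in A$; a number $m$ of vehicles and a time limit $T$. For $i\in N$ let $\delta^+(i)=\{j\in N:(i,j)\in A\}$ and $\delta^-(i)=\{j\in N:(j,i)\in A\}$; for $V\subseteq N$ let $\delta^+(V)=\{(i,j)\in A: i\in V, j\in N\setminus V\}$ and $\delta^-(V)=\{(i,j)\in A: i\in N\setminus V, j\in V\}$. For $i,j\in N$, $R_{ij}$ denotes the minimum of $\sum_{a\in A_p}d_a$ over all paths $p$ from $i$ to $j$ in $G$ (with arc set $A_p$), and $R_{ii}=0$. $\mathcal{K}$ is the set of pairs $\langle i,j\rangle$ with $i,j\in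 N\setminus\{s,t\}$ such that every route from $s$ to $t$ in $G$ visiting both $i$ and $j$ (in any order) has total traverse time (sum of $d$ over its arcs) exceeding $T$. $\mathcal{F}_1$: maximize $\sum_{i\in P}p_iy_i$ over $x\in\{0,1\}^A$, $y\in\{0,1\}^N$, $z\in\mathbb{R}^A$, $\varphi\in\mathbb{R}$ subject to: $y_i=1$ for all $i\in S\cup\{s,t\}$; $\sum_{j\in\delta^+(i)}x_{ij}=y_i$ for all $i\in S\cup P$; $\sum_{j\in\delta^+(s)}x_{sj}=\sum_{i\in\delta^-(t)}x_{it}=m-\varphi$; $\sum_{i\in\delta^-(s)}x_{is}=\sum_{j\in\delta^+(t)}x_{tj}=0$; $\sum_{j\in\delta^+(i)}x_{ij}-\sum_{j\in\delta^-(i)}x_{ji}=0$ for all $i\in S\cup P$; $z_{sj}=d_{sj}x_{sj}$ for all $j\in\delta^+(s)$; $\sum_{j\in\delta^+(i)}z_{ij}-\sum_{j\in\delta^-(i)}z_{ji}=\sum_{j\in\delta^+(i)}d_{ij}x_{ij}$ for all $i\in S\cup P$; $z_{ij}\le(T-R_{jt})x_{ij}$ and $z_{ij}\ge(R_{si}+d_{ij})x_{ij}$ for all $(i,j)\in A$; $z\ge0$; $0\le\varphi\le m$. *)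

theory Defs
  imports "HOL-Library.Extended_Real"
begin

definition is_walk :: "('v \<times> 'v) set \<Rightarrow> 'v list \<Rightarrow> bool" where
  "is_walk A vs \<longleftrightarrow> vs \<noteq> [] \<and> (\<forall>k. Suc k < length vs \<longrightarrow> (vs ! k, vs ! Suc k) \<in> A)"

definition is_path :: "('v \<times> 'v) set \<Rightarrow> 'v \<Rightarrow> 'v \<Rightarrow> 'v list \<Rightarrow> bool" where
  "is_path A i j vs \<longleftrightarrow> is_walk A vs \<and> distinct vs \<and> hd vs = i \<and> last vs = j"

definition walk_cost :: "('v \<times> 'v \<Rightarrow> real) \<Rightarrow> 'v list \<Rightarrow> real" where
  "walk_cost d vs = (\<Sum>k<length vs - 1. d (vs ! k, vs ! Suc k))"

text \<open>Shortest path times R_ij (infinite if j is unreachable from i), with R_ii = 0.\<close>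
definition Rdist :: "('v \<times> 'v) set \<Rightarrow> ('v \<times> 'v \<Rightarrow> real) \<Rightarrow> 'v \<Rightarrow> 'v \<Rightarrow> ereal" where
  "Rdist A d i j = (if i = j then 0
     else Inf {ereal (walk_cost d p) | p. is_path A i j p})"

definition out_nbrs :: "'v set \<Rightarrow> ('v \<times> 'v) set \<Rightarrow> 'v \<Rightarrow> 'v set" where
  "out_nbrs N A i = {j \<in> N. (i, j) \<in> A}"

definition in_nbrs :: "'v set \<Rightarrow> ('v \<times> 'v) set \<Rightarrow> 'v \<Rightarrow> 'v set" where
  "in_nbrs N A i = {j \<in> N. (j, i) \<in> A}"

definition delta_out :: "'v set \<Rightarrow> ('v \<times> 'v) set \<Rightarrow> 'v set \<Rightarrow> ('v \<times> 'v) set" where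
  "delta_out N A V = {(i, j) \<in> A. i \<in> V \<and> j \<in> N - V}"

definition delta_in :: "'v set \<Rightarrow> ('v \<times> 'v) set \<Rightarrow> 'v set \<Rightarrow> ('v \<times> 'v) set" where
  "delta_in N A V = {(i, j) \<in> A. i \<in> N - V \<and> j \<in> V}"

definition stop_instance ::
  "'v set \<Rightarrow> ('v \<times> 'v) set \<Rightarrow> 'v \<Rightarrow> 'v \<Rightarrow> 'v set \<Rightarrow> 'v set \<Rightarrow> ('v \<Rightarrow> int)
   \<Rightarrow> ('v \<times> 'v \<Rightarrow> real) \<Rightarrow> nat \<Rightarrow> real \<Rightarrow> bool" where
  "stop_instance N A s t S P p d m T \<longleftrightarrow>
     finite N \<and> A \<subseteq> N \<times> N \<and> s \<in> N \<and> t \<in> N \<and> s \<noteq> t \<and>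
     S \<subseteq> N - {s, t} \<and> P \<subseteq> N - {s, t} \<and> S \<inter> P = {} \<and> N = S \<union> P \<union> {s, t} \<and>
     (\<forall>i\<in>P. p i > 0) \<and> (\<forall>a\<in>A. d a > 0)"

definition conflict_pairs ::
  "'v set \<Rightarrow> ('v \<times> 'v) set \<Rightarrow> 'v \<Rightarrow> 'v \<Rightarrow> ('v \<times> 'v \<Rightarrow> real) \<Rightarrow> real \<Rightarrow> ('v \<times> 'v) set" where
  "conflict_pairs N A s t d T =
     {(i, j). i \<in> N - {s, t} \<and> j \<in> N - {s, t} \<and>
        (\<forall>r. is_path A s t r \<and> i \<in> set r \<and> j \<in> set r \<longrightarrow> walk_cost d r > T)}"

definition F1_feasible ::
  "'v set \<Rightarrow> ('v \<times> 'v) set \<Rightarrow> 'v \<Rightarrow> 'v \<Rightarrow> 'v set \<Rightarrow> 'v set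
   \<Rightarrow> ('v \<times> 'v \<Rightarrow> real) \<Rightarrow> nat \<Rightarrow> real
   \<Rightarrow> ('v \<times> 'v \<Rightarrow> real) \<Rightarrow> ('v \<Rightarrow> real) \<Rightarrow> ('v \<times> 'v \<Rightarrow> real) \<Rightarrow> real \<Rightarrow> bool" where
  "F1_feasible N A s t S P d m T x y z \<phi> \<longleftrightarrow>
     (\<forall>a\<in>A. x a \<in> {0, 1}) \<and> (\<forall>i\<in>N. y i \<in> {0, 1}) \<and>
     (\<forall>i\<in>S \<union> {s, t}. y i = 1) \<and>
     (\<forall>i\<in>S \<union> P. (\<Sum>j\<in>out_nbrs N A i. x (i, j)) = y i) \<and>
     (\<Sum>j\<in>out_nbrs N A s. x (s, j)) = real m - \<phi> \<and>
     (\<Sum>i\<in>in_nbrs N A t. x (i, t)) = real m - \<phi> \<and>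
     (\<Sum>i\<in>in_nbrs N A s. x (i, s)) = 0 \<and>
     (\<Sum>j\<in>out_nbrs N A t. x (t, j)) = 0 \<and>
     (\<forall>i\<in>S \<union> P. (\<Sum>j\<in>out_nbrs N A i. x (i, j)) - (\<Sum>j\<in>in_nbrs N A i. x (j, i)) = 0) \<and>
     (\<forall>j\<in>out_nbrs N A s. z (s, j) = d (s, j) * x (s, j)) \<and>
     (\<forall>i\<in>S \<union> P. (\<Sum>j\<in>out_nbrs N A i. z (i, j)) - (\<Sum>j\<in>in_nbrs N A i. z (j, i))
                   = (\<Sum>j\<in>out_nbrs N A i. d (i, j) * x (i, j))) \<and>
     (\<forall>(i, j)\<in>A. ereal (z (i, j)) \<le> (ereal T - Rdist A d j t) * ereal (x (i, j)) \<and>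
                  ereal (z (i, j)) \<ge> (Rdist A d s i + ereal (d (i, j))) * ereal (x (i, j))) \<and>
     (\<forall>a\<in>A. z a \<ge> 0) \<and>
     0 \<le> \<phi> \<and> \<phi> \<le> real m"

end

theory Submission
  imports Defs
begin


fun xw :: "('v \<times> 'v) set \<Rightarrow> ('v \<times> 'v \<Rightarrow> real) \<Rightarrow> 'v list \<Rightarrow> bool" where
  "xw A x [] = False"
| "xw A x [v] = True"
| "xw A x (u # v # r) = ((u, v) \<in> A \<and> x (u, v) = 1 \<and> xw A x (v # r))"

lemma xw_Cons: "q \<noteq> [] \<Longrightarrow> xw A x (v # q) \<longleftrightarrow> (v, hd q) \<in> A \<and> x (v, hd q) = 1 \<and> xw A x q"
  by (cases q) auto

lemma xw_append: "a \<noteq> [] \<Longrightarrow> b \<noteq> [] \<Longrightarrow>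
   xw A x (a @ b) \<longleftrightarrow> xw A x a \<and> xw A x b \<and> (last a, hd b) \<in> A \<and> x (last a, hd b) = 1"
proof (induction a)
  case Nil then show ?case by simp
next
  case (Cons u a)
  show ?case
  proof (cases "a = []")
    case True then show ?thesis using Cons by (auto simp: xw_Cons)
  next
    case False
    then have "xw A x (u # a @ b) \<longleftrightarrow> (u, hd a) \<in> A \<and> x (u, hd a) = 1 \<and> xw A x (a @ b)"
      using xw_Cons[of "a @ b" A x u] Cons.prems by simp
    then show ?thesis using Cons False by (simp add: xw_Cons)
  qed
qed

lemma xw_snoc: "p \<noteq> [] \<Longrightarrow> xw A x (p @ [v]) \<longleftrightarrow> xw A x p \<and> (last p, v) \<in> A \<and> x (last p, v) = 1"
  using xw_append[of p "[v]" A x] by simp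

lemma xw_walk: "xw A x r \<Longrightarrow> is_walk A r"
proof (induction A x r rule: xw.induct)
  case (3 A x u v r)
  then have IH: "is_walk A (v # r)" and uv: "(u, v) \<in> A" by auto
  show ?case unfolding is_walk_def
  proof (intro conjI allI impI)
    fix k assume "Suc k < length (u # v # r)"
    then show "((u # v # r) ! k, (u # v # r) ! Suc k) \<in> A"
      using IH uv unfolding is_walk_def by (cases k) auto
  qed simp
qed (auto simp: is_walk_def)

lemma wc_Cons2: "walk_cost d (u # v # r) = d (u, v) + walk_cost d (v # r)"
  unfolding walk_cost_def by (simp add: sum.lessThan_Suc_shift del: sum.lessThan_Suc)

lemma wc_single: "walk_cost d [v] = 0"
  unfolding walk_cost_def by simp

lemma wc_append: "a \<noteq> [] \<Longrightarrow> b \<noteq> [] \<Longrightarrow>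
   walk_cost d (a @ b) = walk_cost d a + d (last a, hd b) + walk_cost d b"
proof (induction a rule: induct_list012)
  case (2 u) then show ?case by (cases b) (auto simp: wc_Cons2 wc_single)
next
  case (3 u v r) then show ?case by (simp add: wc_Cons2)
qed simp

lemma wc_snoc: "p \<noteq> [] \<Longrightarrow> walk_cost d (p @ [v]) = walk_cost d p + d (last p, v)"
  using wc_append[of p "[v]" d] by (simp add: wc_single)

lemma xw_in_tl: "xw A x r \<Longrightarrow> w \<in> set (tl r) \<Longrightarrow> \<exists>u. (u, w) \<in> A \<and> x (u, w) = 1"
  by (induction A x r rule: xw.induct) auto

lemma xw_out_butlast: "xw A x r \<Longrightarrow> w \<in> set (butlast r) \<Longrightarrow> \<exists>u. (w, u) \<in> A \<and> x (w, u) = 1"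
  by (induction A x r rule: xw.induct) auto

lemma cross_in: "xw A x r \<Longrightarrow> hd r \<notin> V \<Longrightarrow> last r \<in> V \<Longrightarrow>
   \<exists>u w. (u, w) \<in> A \<and> x (u, w) = 1 \<and> u \<notin> V \<and> w \<in> V \<and> w \<in> set r"
proof (induction A x r rule: xw.induct)
  case (3 A x u v r)
  show ?case
  proof (cases "v \<in> V")
    case True then show ?thesis using 3 by auto
  next
    case False then show ?thesis using 3 by fastforce
  qed
qed auto

lemma cross_out: "xw A x r \<Longrightarrow> hd r \<in> V \<Longrightarrow> last r \<notin> V \<Longrightarrow>
   \<exists>u w. (u, w) \<in> A \<and> x (u, w) = 1 \<and> u \<in> V \<and> w \<notin> V \<and> u \<in> set r"
proof (induction A x r rule: xw.induct)
  case (3 A x u v r)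
  show ?case
  proof (cases "v \<in> V")
    case True then show ?thesis using 3 by fastforce
  next
    case False then show ?thesis using 3 by auto
  qed
qed auto

lemma sum_ge1: "finite B \<Longrightarrow> (\<And>b. b \<in> B \<Longrightarrow> f b \<ge> (0::real)) \<Longrightarrow> e \<in> B \<Longrightarrow> f e \<le> sum f B"
  by (rule member_le_sum) auto

lemma sum_ge2: "finite B \<Longrightarrow> (\<And>b. b \<in> B \<Longrightarrow> f b \<ge> (0::real)) \<Longrightarrow> e1 \<in> B \<Longrightarrow> e2 \<in> B \<Longrightarrow> e1 \<noteq> e2
   \<Longrightarrow> f e1 + f e2 \<le> sum f B"
proof -
  assume a: "finite B" "\<And>b. b \<in> B \<Longrightarrow> f b \<ge> (0::real)" "e1 \<in> B" "e2 \<in> B" "e1 \<noteq> e2"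
  have "sum f {e1, e2} \<le> sum f B" using a by (intro sum_mono2) auto
  then show ?thesis using a by simp
qed



locale stp =
  fixes N :: "'v set" and A :: "('v \<times> 'v) set" and s t :: 'v and S P :: "'v set"
    and p :: "'v \<Rightarrow> int" and d :: "'v \<times> 'v \<Rightarrow> real" and m :: nat and T :: real
    and x :: "'v \<times> 'v \<Rightarrow> real" and y :: "'v \<Rightarrow> real" and z :: "'v \<times> 'v \<Rightarrow> real" and \<phi> :: real
  assumes inst: "stop_instance N A s t S P p d m T"
    and feas: "F1_feasible N A s t S P d m T x y z \<phi>"
begin

lemma finN: "finite N" and AN: "A \<subseteq> N \<times> N" and st: "s \<noteq> t"
  and Ndec: "N = S \<union> P \<union> {s, t}" and SPst: "s \<notin> S \<union> P" "t \<notin> S \<union> P"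
  using inst unfolding stop_instance_def by blast+

lemma finA: "finite A"
  using AN finN by (metis finite_SigmaI finite_subset)

lemma dpos: "a \<in> A \<Longrightarrow> d a > 0"
  using inst unfolding stop_instance_def by blast

lemma x01: "a \<in> A \<Longrightarrow> x a = 0 \<or> x a = 1"
  using feas unfolding F1_feasible_def by blast

lemma xnn: "a \<in> A \<Longrightarrow> x a \<ge> 0"
  using x01 by fastforce

lemma y01: "i \<in> N \<Longrightarrow> y i = 0 \<or> y i = 1"
  using feas unfolding F1_feasible_def by blast

lemma outsum: "i \<in> S \<union> P \<Longrightarrow> (\<Sum>j\<in>out_nbrs N A i. x (i, j)) = y i"
  using feas unfolding F1_feasible_def by blast

lemma insum: "i \<in> S \<union> P \<Longrightarrow> (\<Sum>j\<in>in_nbrs N A i. x (j, i)) = y i"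
proof -
  assume i: "i \<in> S \<union> P"
  have "(\<Sum>j\<in>out_nbrs N A i. x (i, j)) - (\<Sum>j\<in>in_nbrs N A i. x (j, i)) = 0"
    using feas i unfolding F1_feasible_def by blast
  then show ?thesis using outsum[OF i] by simp
qed

lemma s_in: "(\<Sum>i\<in>in_nbrs N A s. x (i, s)) = 0"
  using feas unfolding F1_feasible_def by blast

lemma t_out: "(\<Sum>j\<in>out_nbrs N A t. x (t, j)) = 0"
  using feas unfolding F1_feasible_def by blast

lemma zs: "j \<in> out_nbrs N A s \<Longrightarrow> z (s, j) = d (s, j) * x (s, j)"
  using feas unfolding F1_feasible_def by blast

lemma zbal: "i \<in> S \<union> P \<Longrightarrow> (\<Sum>j\<in>out_nbrs N A i. z (i, j)) - (\<Sum>j\<in>in_nbrs N A i. z (j, i))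
                   = (\<Sum>j\<in>out_nbrs N A i. d (i, j) * x (i, j))"
  using feas unfolding F1_feasible_def by blast

lemma zub: "(i, j) \<in> A \<Longrightarrow> ereal (z (i, j)) \<le> (ereal T - Rdist A d j t) * ereal (x (i, j))"
  using feas unfolding F1_feasible_def by blast

lemma znn: "a \<in> A \<Longrightarrow> z a \<ge> 0"
  using feas unfolding F1_feasible_def by blast

lemma z0: "a \<in> A \<Longrightarrow> x a = 0 \<Longrightarrow> z a = 0"
proof -
  assume a: "a \<in> A" "x a = 0"
  obtain i j where ij: "a = (i, j)" by force
  have "ereal (z a) \<le> 0" using zub[of i j] a ij by (simp add: zero_ereal_def[symmetric])
  then show ?thesis using znn[OF a(1)] by simp
qed

lemma finout: "finite (out_nbrs N A i)" and finin: "finite (in_nbrs N A i)"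
  using finN unfolding out_nbrs_def in_nbrs_def by auto

lemma in_out_nbrs: "(i, j) \<in> A \<Longrightarrow> j \<in> out_nbrs N A i" "(i, j) \<in> A \<Longrightarrow> i \<in> in_nbrs N A j"
  using AN unfolding out_nbrs_def in_nbrs_def by auto

lemma inN: "(u, v) \<in> A \<Longrightarrow> u \<in> N \<and> v \<in> N"
  using AN by auto

lemma SP_of: "v \<in> N \<Longrightarrow> v \<noteq> s \<Longrightarrow> v \<noteq> t \<Longrightarrow> v \<in> S \<union> P"
  using Ndec by blast

lemma SP_N: "v \<in> S \<union> P \<Longrightarrow> v \<in> N"
  using Ndec by blast

lemma no_in_s: "(u, s) \<in> A \<Longrightarrow> x (u, s) = 1 \<Longrightarrow> False"
proof -
  assume a: "(u, s) \<in> A" "x (u, s) = 1"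
  have "x (u, s) \<le> (\<Sum>i\<in>in_nbrs N A s. x (i, s))"
    by (rule sum_ge1[OF finin]) (insert a, auto simp: in_nbrs_def xnn dest: inN)
  then show False using s_in a by simp
qed

lemma no_out_t: "(t, w) \<in> A \<Longrightarrow> x (t, w) = 1 \<Longrightarrow> False"
proof -
  assume a: "(t, w) \<in> A" "x (t, w) = 1"
  have "x (t, w) \<le> (\<Sum>j\<in>out_nbrs N A t. x (t, j))"
    by (rule sum_ge1[OF finout]) (insert a, auto simp: out_nbrs_def xnn dest: inN)
  then show False using t_out a by simp
qed

lemma uniq_in: "v \<in> S \<union> P \<Longrightarrow> (u, v) \<in> A \<Longrightarrow> x (u, v) = 1 \<Longrightarrow> (u', v) \<in> A \<Longrightarrow> x (u', v) = 1 \<Longrightarrow> u = u'"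
proof (rule ccontr)
  assume a: "v \<in> S \<union> P" "(u, v) \<in> A" "x (u, v) = 1" "(u', v) \<in> A" "x (u', v) = 1" "u \<noteq> u'"
  have "x (u, v) + x (u', v) \<le> (\<Sum>i\<in>in_nbrs N A v. x (i, v))"
    by (rule sum_ge2[OF finin]) (insert a, auto simp: in_nbrs_def xnn dest: inN)
  moreover have "y v \<le> 1" using y01[of v] SP_N[OF a(1)] by auto
  ultimately show False using insum[OF a(1)] a by simp
qed

lemma uniq_out: "v \<in> S \<union> P \<Longrightarrow> (v, w) \<in> A \<Longrightarrow> x (v, w) = 1 \<Longrightarrow> (v, w') \<in> A \<Longrightarrow> x (v, w') = 1 \<Longrightarrow> w = w'"
proof (rule ccontr)
  assume a: "v \<in> S \<union> P" "(v, w) \<in> A" "x (v, w) = 1" "(v, w') \<in> A" "x (v, w') = 1" "w \<noteq> w'"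
  have "x (v, w) + x (v, w') \<le> (\<Sum>j\<in>out_nbrs N A v. x (v, j))"
    by (rule sum_ge2[OF finout]) (insert a, auto simp: out_nbrs_def xnn dest: inN)
  moreover have "y v \<le> 1" using y01[of v] SP_N[OF a(1)] by auto
  ultimately show False using outsum[OF a(1)] a by simp
qed

lemma y1_out: "v \<in> S \<union> P \<Longrightarrow> y v = 1 \<Longrightarrow> \<exists>w. (v, w) \<in> A \<and> x (v, w) = 1"
proof (rule ccontr)
  assume a: "v \<in> S \<union> P" "y v = 1" "\<nexists>w. (v, w) \<in> A \<and> x (v, w) = 1"
  have "(\<Sum>j\<in>out_nbrs N A v. x (v, j)) = 0"
    using a x01 by (intro sum.neutral) (auto simp: out_nbrs_def)
  then show False using outsum[OF a(1)] a by simp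
qed

lemma y1_in: "v \<in> S \<union> P \<Longrightarrow> y v = 1 \<Longrightarrow> \<exists>u. (u, v) \<in> A \<and> x (u, v) = 1"
proof (rule ccontr)
  assume a: "v \<in> S \<union> P" "y v = 1" "\<nexists>u. (u, v) \<in> A \<and> x (u, v) = 1"
  have "(\<Sum>j\<in>in_nbrs N A v. x (j, v)) = 0"
    using a x01 by (intro sum.neutral) (auto simp: in_nbrs_def)
  then show False using insum[OF a(1)] a by simp
qed

lemma in_y1: "v \<in> S \<union> P \<Longrightarrow> (u, v) \<in> A \<Longrightarrow> x (u, v) = 1 \<Longrightarrow> y v = 1"
proof -
  assume a: "v \<in> S \<union> P" "(u, v) \<in> A" "x (u, v) = 1"
  have "x (u, v) \<le> (\<Sum>i\<in>in_nbrs N A v. x (i, v))"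
    by (rule sum_ge1[OF finin]) (insert a, auto simp: in_nbrs_def xnn dest: inN)
  then show ?thesis using insum[OF a(1)] a y01[of v] SP_N[OF a(1)] by auto
qed

lemma out_y1: "v \<in> S \<union> P \<Longrightarrow> (v, w) \<in> A \<Longrightarrow> x (v, w) = 1 \<Longrightarrow> y v = 1"
proof -
  assume a: "v \<in> S \<union> P" "(v, w) \<in> A" "x (v, w) = 1"
  have "x (v, w) \<le> (\<Sum>j\<in>out_nbrs N A v. x (v, j))"
    by (rule sum_ge1[OF finout]) (insert a, auto simp: out_nbrs_def xnn dest: inN)
  then show ?thesis using outsum[OF a(1)] a y01[of v] SP_N[OF a(1)] by auto
qed

lemma sum_single: "finite B \<Longrightarrow> e \<in> B \<Longrightarrow> (\<And>b. b \<in> B \<Longrightarrow> b \<noteq> e \<Longrightarrow> f b = 0) \<Longrightarrow> sum f B = (f e :: real)"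
  by (metis (no_types, lifting) DiffE add.right_neutral insertCI sum.neutral sum.remove)

lemma zstep: "v \<in> S \<union> P \<Longrightarrow> (u, v) \<in> A \<Longrightarrow> x (u, v) = 1 \<Longrightarrow> (v, w) \<in> A \<Longrightarrow> x (v, w) = 1
   \<Longrightarrow> z (v, w) = z (u, v) + d (v, w)"
proof -
  assume a: "v \<in> S \<union> P" "(u, v) \<in> A" "x (u, v) = 1" "(v, w) \<in> A" "x (v, w) = 1"
  have o0: "x (v, w') = 0" if "w' \<in> out_nbrs N A v" "w' \<noteq> w" for w'
    using that uniq_out[OF a(1) a(4) a(5), of w'] x01[of "(v, w')"] by (auto simp: out_nbrs_def)
  have i0: "x (u', v) = 0" if "u' \<in> in_nbrs N A v" "u' \<noteq> u" for u'
    using that uniq_in[OF a(1) a(2) a(3), of u'] x01[of "(u', v)"] by (auto simp: in_nbrs_def)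
  have "(\<Sum>j\<in>out_nbrs N A v. z (v, j)) = z (v, w)"
    apply (rule sum_single[OF finout in_out_nbrs(1)[OF a(4)]])
    using o0 z0 by (auto simp: out_nbrs_def)
  moreover have "(\<Sum>j\<in>in_nbrs N A v. z (j, v)) = z (u, v)"
    apply (rule sum_single[OF finin in_out_nbrs(2)[OF a(2)]])
    using i0 z0 by (auto simp: in_nbrs_def)
  moreover have "(\<Sum>j\<in>out_nbrs N A v. d (v, j) * x (v, j)) = d (v, w) * x (v, w)"
    apply (rule sum_single[OF finout in_out_nbrs(1)[OF a(4)]])
    using o0 by auto
  ultimately show ?thesis using zbal[OF a(1)] a(5) by simp
qed

lemma zstart: "(s, w) \<in> A \<Longrightarrow> x (s, w) = 1 \<Longrightarrow> z (s, w) = d (s, w)"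
  using zs[OF in_out_nbrs(1)] by simp

lemma zlast: "(u, t) \<in> A \<Longrightarrow> x (u, t) = 1 \<Longrightarrow> z (u, t) \<le> T"
proof -
  assume a: "(u, t) \<in> A" "x (u, t) = 1"
  have "ereal (z (u, t)) \<le> ereal T" using zub[OF a(1)] a(2) by (simp add: Rdist_def)
  then show ?thesis by simp
qed

end


lemma wc_nonneg_gen: "xw A x r \<Longrightarrow> (\<And>a. a \<in> A \<Longrightarrow> d a > 0) \<Longrightarrow> walk_cost d r \<ge> 0"
proof (induction A x r rule: xw.induct)
  case (3 A x u v r)
  then have "d (u, v) > 0" "walk_cost d (v # r) \<ge> 0" by auto
  then show ?case by (simp add: wc_Cons2)
qed (auto simp: wc_single)

context stp
begin

lemma fwd: "(u, v) \<in> A \<Longrightarrow> x (u, v) = 1 \<Longrightarrow> \<exists>q. xw A x q \<and> hd q = v \<and> last q = t"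
proof (induction "card {a\<in>A. x a = 1 \<and> z a > z (u, v)}" arbitrary: u v rule: less_induct)
  case less
  show ?case
  proof (cases "v = t")
    case True then show ?thesis by (intro exI[of _ "[t]"]) simp
  next
    case False
    have vs: "v \<noteq> s" using no_in_s less.prems by blast
    have vSP: "v \<in> S \<union> P" using SP_of inN less.prems(1) vs False by blast
    obtain w where w: "(v, w) \<in> A" "x (v, w) = 1"
      using y1_out[OF vSP in_y1[OF vSP less.prems]] by blast
    have zz: "z (v, w) > z (u, v)" using zstep[OF vSP less.prems w] dpos[OF w(1)] by simp
    have "{a\<in>A. x a = 1 \<and> z a > z (v, w)} \<subset> {a\<in>A. x a = 1 \<and> z a > z (u, v)}"
      using zz w by auto
    then have "card {a\<in>A. x a = 1 \<and> z a > z (v, w)} < card {a\<in>A. x a = 1 \<and> z a > z (u, v)}"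
      by (intro psubset_card_mono) (use finA in auto)
    from less.hyps[OF this w] obtain q where q: "xw A x q" "hd q = w" "last q = t" by blast
    then have qn: "q \<noteq> []" by (cases q) auto
    show ?thesis using q w qn by (intro exI[of _ "v # q"]) (simp add: xw_Cons)
  qed
qed

lemma bwd: "(u, v) \<in> A \<Longrightarrow> x (u, v) = 1 \<Longrightarrow> \<exists>q. xw A x q \<and> hd q = s \<and> last q = u"
proof (induction "card {a\<in>A. x a = 1 \<and> z a < z (u, v)}" arbitrary: u v rule: less_induct)
  case less
  show ?case
  proof (cases "u = s")
    case True then show ?thesis by (intro exI[of _ "[s]"]) simp
  next
    case False
    have ut: "u \<noteq> t" using no_out_t less.prems by blast
    have uSP: "u \<in> S \<union> P" using SP_of inN less.prems(1) ut False by blast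
    obtain h where h: "(h, u) \<in> A" "x (h, u) = 1"
      using y1_in[OF uSP out_y1[OF uSP less.prems]] by blast
    have zz: "z (h, u) < z (u, v)" using zstep[OF uSP h less.prems] dpos[OF less.prems(1)] by simp
    have "{a\<in>A. x a = 1 \<and> z a < z (h, u)} \<subset> {a\<in>A. x a = 1 \<and> z a < z (u, v)}"
      using zz h by auto
    then have "card {a\<in>A. x a = 1 \<and> z a < z (h, u)} < card {a\<in>A. x a = 1 \<and> z a < z (u, v)}"
      by (intro psubset_card_mono) (use finA in auto)
    from less.hyps[OF this h] obtain q where q: "xw A x q" "hd q = s" "last q = h" by blast
    then have qn: "q \<noteq> []" by (cases q) auto
    show ?thesis using q h qn by (intro exI[of _ "q @ [u]"]) (simp add: xw_snoc)
  qed
qed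

lemma route_exists: "i \<in> S \<union> P \<Longrightarrow> y i = 1 \<Longrightarrow>
  \<exists>pp q. xw A x (pp @ i # q) \<and> pp \<noteq> [] \<and> hd pp = s \<and> last (i # q) = t"
proof -
  assume i: "i \<in> S \<union> P" "y i = 1"
  obtain h where h: "(h, i) \<in> A" "x (h, i) = 1" using y1_in[OF i] by blast
  obtain w where w: "(i, w) \<in> A" "x (i, w) = 1" using y1_out[OF i] by blast
  obtain pp where pp: "xw A x pp" "hd pp = s" "last pp = h" using bwd[OF h] by blast
  obtain q where q: "xw A x q" "hd q = w" "last q = t" using fwd[OF w] by blast
  have ppn: "pp \<noteq> []" using pp by (cases pp) auto
  have qn: "q \<noteq> []" using q by (cases q) auto
  have "xw A x (i # q)" using q w qn by (simp add: xw_Cons)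
  then have "xw A x (pp @ i # q)" using xw_append[OF ppn, of "i # q"] pp h by simp
  then show ?thesis using ppn pp q qn by auto
qed

lemma zlemma: "pp \<noteq> [] \<Longrightarrow> xw A x (pp @ [v]) \<Longrightarrow> hd pp = s \<Longrightarrow> z (last pp, v) = walk_cost d (pp @ [v])"
proof (induction pp arbitrary: v rule: rev_induct)
  case Nil then show ?case by simp
next
  case (snoc u pp')
  show ?case
  proof (cases "pp' = []")
    case True
    then have us: "u = s" using snoc.prems by simp
    have "(s, v) \<in> A" "x (s, v) = 1" using snoc.prems us True by auto
    then show ?thesis using True us zstart by (simp add: wc_Cons2 wc_single)
  next
    case False
    have a: "xw A x (pp' @ [u])" "(u, v) \<in> A" "x (u, v) = 1"
      using xw_snoc[of "pp' @ [u]" A x v] snoc.prems by auto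
    then have b: "xw A x pp'" "(last pp', u) \<in> A" "x (last pp', u) = 1"
      using xw_snoc[OF False] by auto
    have us: "u \<noteq> s" using no_in_s b by blast
    have ut: "u \<noteq> t" using no_out_t a by blast
    have uSP: "u \<in> S \<union> P" using SP_of inN a(2) us ut by blast
    have IH: "z (last pp', u) = walk_cost d (pp' @ [u])"
      using snoc.IH[OF False a(1)] snoc.prems False by simp
    have "z (u, v) = z (last pp', u) + d (u, v)" using zstep[OF uSP b(2,3) a(2,3)] .
    then show ?thesis using IH wc_snoc[of "pp' @ [u]" d v] by simp
  qed
qed

lemma wc_nonneg: "xw A x r \<Longrightarrow> walk_cost d r \<ge> 0"
  using wc_nonneg_gen dpos by blast

lemma xw_distinct: "xw A x pp \<Longrightarrow> hd pp = s \<Longrightarrow> distinct pp"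
proof (induction pp rule: rev_induct)
  case Nil then show ?case by simp
next
  case (snoc v pp')
  show ?case
  proof (cases "pp' = []")
    case True then show ?thesis by simp
  next
    case False
    have a: "xw A x pp'" "(last pp', v) \<in> A" "x (last pp', v) = 1"
      using xw_snoc[OF False] snoc.prems by auto
    have dp: "distinct pp'" using snoc.IH a(1) snoc.prems False by simp
    have "v \<notin> set pp'"
    proof
      assume "v \<in> set pp'"
      then obtain a1 b1 where ab: "pp' = a1 @ v # b1" by (meson split_list)
      have vs: "v \<noteq> s" using no_in_s a by blast
      have a1n: "a1 \<noteq> []" using ab vs snoc.prems False by (cases a1) auto
      have xab: "xw A x a1" "xw A x (v # b1)" "(last a1, v) \<in> A" "x (last a1, v) = 1"
        using xw_append[OF a1n, of "v # b1" A x] a(1) ab by auto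
      have "\<exists>w. (v, w) \<in> A \<and> x (v, w) = 1"
      proof (cases "b1 = []")
        case True then show ?thesis using a ab by auto
      next
        case False then show ?thesis using xab(2) xw_Cons by metis
      qed
      then have vt: "v \<noteq> t" using no_out_t by blast
      have vSP: "v \<in> S \<union> P" using SP_of inN a(2) vs vt by blast
      have eq: "last a1 = last pp'" using uniq_in[OF vSP xab(3,4) a(2,3)] .
      have hda: "hd a1 = s" using snoc.prems ab a1n False by simp
      have xa: "xw A x (a1 @ [v])" using xw_snoc[OF a1n] xab by simp
      have z1: "z (last a1, v) = walk_cost d (a1 @ [v])" using zlemma[OF a1n xa hda] .
      have z2: "z (last pp', v) = walk_cost d (pp' @ [v])"
        using zlemma[OF False] snoc.prems False by simp
      have split: "pp' @ [v] = (a1 @ [v]) @ (b1 @ [v])" using ab by simp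
      have xx: "xw A x (b1 @ [v])" "(v, hd (b1 @ [v])) \<in> A"
        using xw_append[of "a1 @ [v]" "b1 @ [v]" A x] snoc.prems split by auto
      have "walk_cost d (pp' @ [v]) = walk_cost d (a1 @ [v]) + d (v, hd (b1 @ [v])) + walk_cost d (b1 @ [v])"
        using split wc_append[of "a1 @ [v]" "b1 @ [v]" d] by simp
      moreover have "d (v, hd (b1 @ [v])) > 0" using dpos xx(2) by blast
      moreover have "walk_cost d (b1 @ [v]) \<ge> 0" using wc_nonneg xx(1) .
      ultimately show False using z1 z2 eq by simp
    qed
    then show ?thesis using dp by simp
  qed
qed

lemma route_good: "xw A x r \<Longrightarrow> hd r = s \<Longrightarrow> last r = t \<Longrightarrow> is_path A s t r \<and> walk_cost d r \<le> T"
proof -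
  assume r: "xw A x r" "hd r = s" "last r = t"
  have rn: "r \<noteq> []" using r by (cases r) auto
  define pp where "pp = butlast r"
  have rr: "r = pp @ [t]" using rn r unfolding pp_def by (metis append_butlast_last_id)
  have ppn: "pp \<noteq> []" using rr r st by (cases pp) auto
  have hp: "hd pp = s" using rr r ppn by simp
  have xp: "(last pp, t) \<in> A" "x (last pp, t) = 1" using xw_snoc[OF ppn] r rr by auto
  have "walk_cost d r = z (last pp, t)" using zlemma[OF ppn] r rr hp by simp
  also have "\<dots> \<le> T" using zlast xp by blast
  finally show ?thesis using xw_walk[OF r(1)] xw_distinct[OF r(1,2)] r unfolding is_path_def by simp
qed

lemma bwd_uniq: "xw A x p1 \<Longrightarrow> xw A x p2 \<Longrightarrow> hd p1 = s \<Longrightarrow> hd p2 = s \<Longrightarrow> last p1 = last p2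
  \<Longrightarrow> last p1 \<noteq> t \<Longrightarrow> p1 = p2"
proof (induction p1 arbitrary: p2 rule: rev_induct)
  case Nil then show ?case by simp
next
  case (snoc v p1')
  obtain p2' v2 where p2: "p2 = p2' @ [v2]" using snoc.prems(2) by (cases p2 rule: rev_exhaust) auto
  have v2: "v2 = v" using snoc.prems p2 by simp
  show ?case
  proof (cases "p1' = []")
    case True
    then have vs: "v = s" using snoc.prems by simp
    show ?thesis
    proof (cases "p2' = []")
      case True then show ?thesis using p2 v2 \<open>p1' = []\<close> by simp
    next
      case False
      then have "(last p2', s) \<in> A" "x (last p2', s) = 1" using xw_snoc[OF False] snoc.prems p2 v2 vs by auto
      then show ?thesis using no_in_s by blast
    qed
  next
    case False
    have a: "xw A x p1'" "(last p1', v) \<in> A" "x (last p1', v) = 1"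
      using xw_snoc[OF False] snoc.prems by auto
    have vs: "v \<noteq> s" using no_in_s a by blast
    have vt: "v \<noteq> t" using snoc.prems by simp
    have vSP: "v \<in> S \<union> P" using SP_of inN a(2) vs vt by blast
    have p2n: "p2' \<noteq> []" using p2 v2 vs snoc.prems by auto
    have b: "xw A x p2'" "(last p2', v) \<in> A" "x (last p2', v) = 1"
      using xw_snoc[OF p2n] snoc.prems p2 v2 by auto
    have eq: "last p1' = last p2'" using uniq_in[OF vSP a(2,3) b(2,3)] .
    have "last p1' \<noteq> t" using no_out_t a by blast
    then have "p1' = p2'" using snoc.IH[OF a(1) b(1)] snoc.prems False p2n eq p2 by simp
    then show ?thesis using p2 v2 by simp
  qed
qed

lemma fwd_uniq: "xw A x q1 \<Longrightarrow> xw A x q2 \<Longrightarrow> hd q1 = hd q2 \<Longrightarrow> hd q1 \<noteq> s \<Longrightarrow> last q1 = t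
  \<Longrightarrow> last q2 = t \<Longrightarrow> q1 = q2"
proof (induction q1 arbitrary: q2)
  case Nil then show ?case by simp
next
  case (Cons v q1')
  obtain v2 q2' where q2: "q2 = v2 # q2'" using Cons.prems(2) by (cases q2) auto
  have v2: "v2 = v" using Cons.prems q2 by simp
  show ?case
  proof (cases "q1' = []")
    case True
    then have vt: "v = t" using Cons.prems by simp
    show ?thesis
    proof (cases "q2' = []")
      case True then show ?thesis using q2 v2 \<open>q1' = []\<close> by simp
    next
      case False
      then have "(t, hd q2') \<in> A" "x (t, hd q2') = 1" using xw_Cons[OF False] Cons.prems q2 v2 vt by auto
      then show ?thesis using no_out_t by blast
    qed
  next
    case False
    have a: "xw A x q1'" "(v, hd q1') \<in> A" "x (v, hd q1') = 1"
      using xw_Cons[OF False] Cons.prems by auto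
    have vt: "v \<noteq> t" using no_out_t a by blast
    have vs: "v \<noteq> s" using Cons.prems by simp
    have vSP: "v \<in> S \<union> P" using SP_of inN a(2) vs vt by blast
    have q2n: "q2' \<noteq> []" using q2 v2 vt Cons.prems by auto
    have b: "xw A x q2'" "(v, hd q2') \<in> A" "x (v, hd q2') = 1"
      using xw_Cons[OF q2n] Cons.prems q2 v2 by auto
    have eq: "hd q1' = hd q2'" using uniq_out[OF vSP a(2,3) b(2,3)] .
    have "hd q1' \<noteq> s" using no_in_s a by blast
    then have "q1' = q2'" using Cons.IH[OF a(1) b(1)] Cons.prems False q2n eq q2 by simp
    then show ?thesis using q2 v2 by simp
  qed
qed

lemma route_uniq: "xw A x r1 \<Longrightarrow> hd r1 = s \<Longrightarrow> last r1 = t \<Longrightarrow> xw A x r2 \<Longrightarrow> hd r2 = s \<Longrightarrow> last r2 = t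
  \<Longrightarrow> w \<in> set r1 \<Longrightarrow> w \<in> set r2 \<Longrightarrow> w \<noteq> s \<Longrightarrow> w \<noteq> t \<Longrightarrow> r1 = r2"
proof -
  assume r1: "xw A x r1" "hd r1 = s" "last r1 = t" and r2: "xw A x r2" "hd r2 = s" "last r2 = t"
    and w: "w \<in> set r1" "w \<in> set r2" "w \<noteq> s" "w \<noteq> t"
  obtain a1 b1 where ab1: "r1 = a1 @ w # b1" using w(1) by (meson split_list)
  obtain a2 b2 where ab2: "r2 = a2 @ w # b2" using w(2) by (meson split_list)
  have a1n: "a1 \<noteq> []" using ab1 r1 w by (cases a1) auto
  have a2n: "a2 \<noteq> []" using ab2 r2 w by (cases a2) auto
  have x1: "xw A x a1" "xw A x (w # b1)" "(last a1, w) \<in> A" "x (last a1, w) = 1"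
    using xw_append[OF a1n, of "w # b1" A x] r1 ab1 by auto
  have x2: "xw A x a2" "xw A x (w # b2)" "(last a2, w) \<in> A" "x (last a2, w) = 1"
    using xw_append[OF a2n, of "w # b2" A x] r2 ab2 by auto
  have "a1 @ [w] = a2 @ [w]"
    apply (rule bwd_uniq)
    using x1 x2 xw_snoc[OF a1n] xw_snoc[OF a2n] r1 r2 ab1 ab2 a1n a2n w by auto
  moreover have "w # b1 = w # b2"
    apply (rule fwd_uniq)
    using x1 x2 r1 r2 ab1 ab2 w by auto
  ultimately show ?thesis using ab1 ab2 by simp
qed

end


context stp
begin

lemma enter: "i \<in> S \<union> P \<Longrightarrow> y i = 1 \<Longrightarrow> V \<subseteq> N - {s} \<Longrightarrow> i \<in> V \<Longrightarrow>
  \<exists>r e. xw A x r \<and> hd r = s \<and> last r = t \<and> i \<in> set r \<and> e \<in> delta_in N A V \<and> x e = 1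
     \<and> snd e \<in> set r \<and> snd e \<noteq> s \<and> snd e \<noteq> t"
proof -
  assume i: "i \<in> S \<union> P" "y i = 1" and V: "V \<subseteq> N - {s}" "i \<in> V"
  obtain pp q where r: "xw A x (pp @ i # q)" "pp \<noteq> []" "hd pp = s" "last (i # q) = t"
    using route_exists[OF i] by blast
  have xs: "xw A x pp" "(last pp, i) \<in> A" "x (last pp, i) = 1"
    using xw_append[OF r(2), of "i # q" A x] r(1) by auto
  have xpi: "xw A x (pp @ [i])" using xw_snoc[OF r(2)] xs by simp
  obtain u w where uw: "(u, w) \<in> A" "x (u, w) = 1" "u \<notin> V" "w \<in> V" "w \<in> set (pp @ [i])"
    using cross_in[OF xpi, of V] r V by auto
  have ws: "w \<noteq> s" using no_in_s uw by blast
  have wt: "w \<noteq> t"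
  proof
    assume "w = t"
    then have "w \<in> set (butlast (pp @ [i]))" using uw(5) i(1) SPst by auto
    then show False using xw_out_butlast[OF xpi] no_out_t \<open>w = t\<close> by blast
  qed
  have "(u, w) \<in> delta_in N A V" using uw inN[OF uw(1)] unfolding delta_in_def by auto
  moreover have "last (pp @ i # q) = t" using r(4) by simp
  ultimately show ?thesis using r uw ws wt
    by (intro exI[of _ "pp @ i # q"] exI[of _ "(u, w)"]) auto
qed

lemma leave: "i \<in> S \<union> P \<Longrightarrow> y i = 1 \<Longrightarrow> V \<subseteq> N - {t} \<Longrightarrow> i \<in> V \<Longrightarrow>
  \<exists>r e. xw A x r \<and> hd r = s \<and> last r = t \<and> i \<in> set r \<and> e \<in> delta_out N A V \<and> x e = 1
     \<and> fst e \<in> set r \<and> fst e \<noteq> s \<and> fst e \<noteq> t"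
proof -
  assume i: "i \<in> S \<union> P" "y i = 1" and V: "V \<subseteq> N - {t}" "i \<in> V"
  obtain pp q where r: "xw A x (pp @ i # q)" "pp \<noteq> []" "hd pp = s" "last (i # q) = t"
    using route_exists[OF i] by blast
  have xs: "xw A x (i # q)"
    using xw_append[OF r(2), of "i # q" A x] r(1) by auto
  obtain u w where uw: "(u, w) \<in> A" "x (u, w) = 1" "u \<in> V" "w \<notin> V" "u \<in> set (i # q)"
    using cross_out[OF xs, of V] r V by auto
  have ut: "u \<noteq> t" using no_out_t uw by blast
  have us: "u \<noteq> s"
  proof
    assume "u = s"
    then have "u \<in> set (tl (i # q))" using uw(5) i(1) SPst by auto
    then show False using xw_in_tl[OF xs] no_in_s \<open>u = s\<close> by blast
  qed
  have "(u, w) \<in> delta_out N A V" using uw inN[OF uw(1)] unfolding delta_out_def by auto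
  moreover have "last (pp @ i # q) = t" using r(4) by simp
  ultimately show ?thesis using r uw us ut
    by (intro exI[of _ "pp @ i # q"] exI[of _ "(u, w)"]) auto
qed

lemma combine:
  assumes B: "B \<subseteq> A" and conf: "(i, j) \<in> conflict_pairs N A s t d T"
    and ij: "i \<in> S \<union> P" "j \<in> S \<union> P"
    and H: "\<And>v. v \<in> {i, j} \<Longrightarrow> y v = 1 \<Longrightarrow> \<exists>r e. xw A x r \<and> hd r = s \<and> last r = t \<and> v \<in> set r
        \<and> e \<in> B \<and> x e = 1 \<and> g e \<in> set r \<and> g e \<noteq> s \<and> g e \<noteq> t"
  shows "y i + y j \<le> sum x B"
proof -
  have fB: "finite B" using B finA finite_subset by blast
  have nn: "\<And>b. b \<in> B \<Longrightarrow> x b \<ge> 0" using B xnn by blast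
  have noroute: False if "xw A x r" "hd r = s" "last r = t" "i \<in> set r" "j \<in> set r" for r
  proof -
    have "is_path A s t r" "walk_cost d r \<le> T" using route_good that by auto
    moreover have "walk_cost d r > T" using conf that calculation unfolding conflict_pairs_def by auto
    ultimately show False by simp
  qed
  have yi: "y i = 0 \<or> y i = 1" using y01 SP_N ij by blast
  have yj: "y j = 0 \<or> y j = 1" using y01 SP_N ij by blast
  have s0: "sum x B \<ge> 0" using nn by (simp add: sum_nonneg)
  show ?thesis
  proof (cases "y i = 1")
    case yi1: True
    then obtain r1 e1 where R1: "xw A x r1" "hd r1 = s" "last r1 = t" "i \<in> set r1" "e1 \<in> B" "x e1 = 1"
       "g e1 \<in> set r1" "g e1 \<noteq> s" "g e1 \<noteq> t" using H[of i] by blast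
    have g1: "x e1 \<le> sum x B" using sum_ge1[of B x, OF fB nn R1(5)] .
    show ?thesis
    proof (cases "y j = 1")
      case True
      then obtain r2 e2 where R2: "xw A x r2" "hd r2 = s" "last r2 = t" "j \<in> set r2" "e2 \<in> B" "x e2 = 1"
         "g e2 \<in> set r2" "g e2 \<noteq> s" "g e2 \<noteq> t" using H[of j] by blast
      have "e1 \<noteq> e2"
      proof
        assume "e1 = e2"
        then have "r1 = r2" using route_uniq[OF R1(1-3) R2(1-3) R1(7)] R2(7) R1(8,9) by simp
        then show False using noroute R1 R2 by blast
      qed
      then have "x e1 + x e2 \<le> sum x B" using sum_ge2[of B x, OF fB nn R1(5) R2(5)] by simp
      then show ?thesis using yi1 True R1 R2 by simp
    next
      case False then show ?thesis using yj yi1 g1 R1 by simp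
    qed
  next
    case False
    then have yi0: "y i = 0" using yi by simp
    show ?thesis
    proof (cases "y j = 1")
      case True
      then obtain r2 e2 where R2: "e2 \<in> B" "x e2 = 1" using H[of j] by blast
      show ?thesis using sum_ge1[of B x, OF fB nn R2(1)] R2 yi0 True by simp
    next
      case False then show ?thesis using yj yi0 s0 by simp
    qed
  qed
qed

end

theorem corollary3:
  fixes N :: "'v set" and A :: "('v \<times> 'v) set" and s t :: 'v and S P :: "'v set"
    and p :: "'v \<Rightarrow> int" and d :: "'v \<times> 'v \<Rightarrow> real" and m :: nat and T :: real
    and x :: "'v \<times> 'v \<Rightarrow> real" and y :: "'v \<Rightarrow> real" and z :: "'v \<times> 'v \<Rightarrow> real" and \<phi> :: real
  assumes "stop_instance N A s t S P p d m T"
    and "F1_feasible N A s t S P d m T x y z \<phi>"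
    and "(i, j) \<in> conflict_pairs N A s t d T"
  shows "(\<forall>V. V \<subseteq> N - {s} \<and> {i, j} \<subseteq> V \<longrightarrow> (\<Sum>e\<in>delta_in N A V. x e) \<ge> y i + y j)
       \<and> (\<forall>V. V \<subseteq> N - {t} \<and> {i, j} \<subseteq> V \<longrightarrow> (\<Sum>e\<in>delta_out N A V. x e) \<ge> y i + y j)"
proof -
  interpret stp N A s t S P p d m T x y z \<phi> using assms(1,2) by unfold_locales
  have ij: "i \<in> S \<union> P" "j \<in> S \<union> P"
    using assms(3) SP_of unfolding conflict_pairs_def by auto
  have a: "(\<Sum>e\<in>delta_in N A V. x e) \<ge> y i + y j" if V: "V \<subseteq> N - {s}" "{i, j} \<subseteq> V" for V
  proof (rule combine[OF _ assms(3) ij, where g = snd])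
    show "delta_in N A V \<subseteq> A" unfolding delta_in_def by auto
  next
    fix v assume v: "v \<in> {i, j}" "y v = 1"
    then have "v \<in> S \<union> P" "v \<in> V" using ij V by auto
    then show "\<exists>r e. xw A x r \<and> hd r = s \<and> last r = t \<and> v \<in> set r \<and> e \<in> delta_in N A V \<and> x e = 1
        \<and> snd e \<in> set r \<and> snd e \<noteq> s \<and> snd e \<noteq> t" using enter[OF _ v(2) V(1)] by blast
  qed
  have b: "(\<Sum>e\<in>delta_out N A V. x e) \<ge> y i + y j" if V: "V \<subseteq> N - {t}" "{i, j} \<subseteq> V" for V
  proof (rule combine[OF _ assms(3) ij, where g = fst])
    show "delta_out N A V \<subseteq> A" unfolding delta_out_def by auto
  next
    fix v assume v: "v \<in> {i, j}" "y v = 1"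
    then have "v \<in> S \<union> P" "v \<in> V" using ij V by auto
    then show "\<exists>r e. xw A x r \<and> hd r = s \<and> last r = t \<and> v \<in> set r \<and> e \<in> delta_out N A V \<and> x e = 1
        \<and> fst e \<in> set r \<and> fst e \<noteq> s \<and> fst e \<noteq> t" using leave[OF _ v(2) V(1)] by blast
  qed
  show ?thesis using a b by blast
qed


end
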